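(* Let $K=2^m$ with $m\in\mathbb{N}$ and let $\Phi$ be the $K\times K$ Sylvester Hadamard matrix. Among all matrices of the form $Z=\Phi\,\mathrm{diag}(0,a)\,\Phi^T\in\mathbb{R}^{K\times K}$ with $a\in\mathbb{R}^{K-1}_{\ge0}$ satisfying $Z_{cc}-Z_{c'c}>0$ for all $c'\neq c$, the minimum possible rank is exactly $m=\log_2K$.
   Context: Sylvester Hadamard matrices: $\Phi_1=(1)$, $\Phi_{2^m}=\begin{bmatrix}\Phi_{2^{m-1}}&\Phi_{2^{m-1}}\\ \Phi_{2^{m-1}}&-\Phi_{2^{m-1}}\end{bmatrix}$. $\mathrm{diag}(0,a)$ is the $K\times K$ diagonal matrix with diagonal $(0,a_1,\dots,a_{K-1})$. *)

theory Defs
  imports "Jordan_Normal_Form.DL_Rank"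
begin

text \<open>Entries (0-indexed) of the Sylvester Hadamard matrix of order 2^m, defined by the
  block recursion Phi_1 = (1), Phi_{2^(m+1)} = [[Phi, Phi], [Phi, -Phi]].\<close>
fun sylvester_entry :: "nat \<Rightarrow> nat \<Rightarrow> nat \<Rightarrow> real" where
  "sylvester_entry 0 i j = 1"
| "sylvester_entry (Suc m) i j =
     (let h = 2 ^ m in
      if i < h \<and> j < h then sylvester_entry m i j
      else if i < h then sylvester_entry m i (j - h)
      else if j < h then sylvester_entry m (i - h) j
      else - sylvester_entry m (i - h) (j - h))"

definition sylvester_hadamard :: "nat \<Rightarrow> real mat" where
  "sylvester_hadamard m = mat (2 ^ m) (2 ^ m) (\<lambda>(i, j). sylvester_entry m i j)"

text \<open>diag(0,a): K x K diagonal matrix with diagonal (0, a_1, ..., a_{K-1});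
  the vector a has dimension K-1 and (0-indexed) a $ (i-1) is a_i.\<close>
definition diag0 :: "nat \<Rightarrow> real vec \<Rightarrow> real mat" where
  "diag0 K a = mat K K (\<lambda>(i, j). if i = j \<and> i \<noteq> 0 then a $ (i - 1) else 0)"

definition Zmat :: "nat \<Rightarrow> real vec \<Rightarrow> real mat" where
  "Zmat m a = sylvester_hadamard m * diag0 (2 ^ m) a * transpose_mat (sylvester_hadamard m)"

definition admissible :: "nat \<Rightarrow> real vec \<Rightarrow> bool" where
  "admissible m a \<longleftrightarrow>
     a \<in> carrier_vec (2 ^ m - 1) \<and> (\<forall>i < 2 ^ m - 1. a $ i \<ge> 0) \<and>
     (\<forall>c < 2 ^ m. \<forall>c' < 2 ^ m. c' \<noteq> c \<longrightarrow> Zmat m a $$ (c, c) - Zmat m a $$ (c', c) > 0)"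

end

theory Submission
  imports Defs
begin


lemma (in vec_space) mult_in_span:
  assumes A: "A \<in> carrier_mat n nc" and v: "v \<in> carrier_vec nc"
  shows "A *\<^sub>v v \<in> span (set (cols A))"
proof -
  have cc: "set (cols A) \<subseteq> carrier_vec n" using A cols_dim by blast
  have "lincomb_list (\<lambda>i. v $ i) (cols A) = mat_of_cols n (cols A) *\<^sub>v vec (length (cols A)) (\<lambda>i. v $ i)"
    by (rule lincomb_list_as_mat_mult) (use cc in auto)
  also have "\<dots> = A *\<^sub>v v"
  proof -
    have 1: "vec (length (cols A)) (\<lambda>i. v $ i) = v" using A v by (intro eq_vecI) auto
    have 2: "mat_of_cols n (cols A) = A" using mat_of_cols_cols[of A] A by simp
    show ?thesis unfolding 1 2 ..
  qed
  finally have "A *\<^sub>v v \<in> span_list (cols A)" by (intro in_span_listI[where c="\<lambda>i. v $ i"]) auto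
  then show ?thesis using span_list_as_span[OF cc] by simp
qed
lemma (in vec_space) rank_ge_li_in_span:
  assumes A: "A \<in> carrier_mat n nc" and T: "T \<subseteq> span (set (cols A))" and li: "lin_indpt T"
  shows "card T \<le> rank A"
proof -
  have cc: "set (cols A) \<subseteq> carrier_vec n" using A cols_dim by blast
  have sub: "submodule class_ring (span (set (cols A))) V" using span_is_submodule cc by simp
  have vs: "vectorspace class_ring (span_vs (set (cols A)))"
    using span_is_subspace[THEN subspace_is_vs, of "set (cols A)"] cc by auto
  have li2: "LinearCombinations.module.lin_indpt class_ring (span_vs (set (cols A))) T"
    using span_li_not_depend(2)[OF T sub] li by simp
  have fd: "vectorspace.fin_dim class_ring (span_vs (set (cols A)))" using fin_dim_span_cols[OF A] .
  show ?thesis unfolding rank_def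
    using vectorspace.li_le_dim(2)[OF vs fd _ li2] T by simp
qed

lemma (in vec_space) rank_le_span_card:
  assumes A: "A \<in> carrier_mat n nc" and T: "set (cols A) \<subseteq> span T" and fT: "finite T"
    and cT: "T \<subseteq> carrier_vec n"
  shows "rank A \<le> card T"
proof -
  have vsT: "vectorspace class_ring (vs (span T))" using span_is_subspace[THEN subspace_is_vs, of T] cT by auto
  have subT: "submodule class_ring (span T) V" using span_is_submodule cT by simp
  have "subspace class_ring (span (set (cols A))) (vs (span T))"
    using vectorspace.span_is_subspace[OF vsT, of "set (cols A)", unfolded
    span_li_not_depend(1)[OF T subT]] T by auto
  moreover have fd: "vectorspace.fin_dim class_ring (vs (span T))"
       "vectorspace.fin_dim class_ring (vs (span T)\<lparr>carrier := span (set (cols A))\<rparr>)"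
    using fin_dim_span fin_dim_span_cols A fT cT by auto
  moreover have "vectorspace.dim class_ring (vs (span T)) \<le> card T"
  proof -
    have "T \<subseteq> span T" using in_own_span cT by simp
    then show ?thesis
      using vectorspace.gen_ge_dim[OF vsT fT] span_li_not_depend(1)[OF _ subT] by simp
  qed
  ultimately show ?thesis unfolding rank_def using vectorspace.subspace_dim[OF vsT] by fastforce
qed


abbreviation E where "E \<equiv> sylvester_entry"

lemma E_sq: "E m i j * E m i j = 1"
  by (induction m arbitrary: i j) (auto simp: Let_def)

lemma E_sym: "E m i j = E m j i"
  by (induction m arbitrary: i j) (auto simp: Let_def)

lemma E_0: "E m i 0 = 1"
  by (induction m arbitrary: i) (auto simp: Let_def)

lemma E_lo: "l < 2^m \<Longrightarrow> E (Suc m) i l = E m (if i < 2^m then i else i - 2^m) l"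
  by (auto simp: Let_def)

lemma E_hi: "l < 2^m \<Longrightarrow> E (Suc m) i (l + 2^m) =
   (if i < 2^m then 1 else -1) * E m (if i < 2^m then i else i - 2^m) l"
  by (auto simp: Let_def)

lemma sum_lessThan_add: "(\<Sum>l<a+n. f l) = (\<Sum>l<a. f l) + (\<Sum>l<n. f (a + l::nat))"
  by (induction n) (simp_all add: add_ac)

lemma sum_split2: "(\<Sum>l<2^Suc m. (f::nat\<Rightarrow>real) l) = (\<Sum>l<2^m. f l) + (\<Sum>l<2^m. f (l + 2^m))"
proof -
  have "(\<Sum>l<2^m + 2^m. f l) = (\<Sum>l<2^m. f l) + (\<Sum>l<2^m. f (2^m + l))"
    by (rule sum_lessThan_add)
  then show ?thesis by (simp add: add.commute mult_2)
qed

lemma E_orth: "i < 2^m \<Longrightarrow> j < 2^m \<Longrightarrow>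
  (\<Sum>l<2^m. E m i l * E m j l) = (if i = j then 2^m else 0)"
proof (induction m arbitrary: i j)
  case 0 then show ?case by simp
next
  case (Suc m)
  define i' where "i' = (if i < 2^m then i else i - 2^m)"
  define j' where "j' = (if j < 2^m then j else j - 2^m)"
  define si where "si = (if i < 2^m then 1 else -1::real)"
  define sj where "sj = (if j < 2^m then 1 else -1::real)"
  have i': "i' < 2^m" and j': "j' < 2^m" using Suc.prems by (auto simp: i'_def j'_def)
  have "(\<Sum>l<2^Suc m. E (Suc m) i l * E (Suc m) j l)
      = (\<Sum>l<2^m. E m i' l * E m j' l) + (\<Sum>l<2^m. (si*sj) * (E m i' l * E m j' l))"
    unfolding sum_split2 by (simp add: E_lo E_hi i'_def j'_def si_def sj_def)
  also have "\<dots> = (1 + si*sj) * (if i' = j' then 2^m else 0)"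
    by (simp add: sum_distrib_left[symmetric] Suc.IH[OF i' j'] algebra_simps)
  also have "\<dots> = (if i = j then 2^Suc m else 0)"
    using Suc.prems by (auto simp: i'_def j'_def si_def sj_def split: if_splits)
  finally show ?case .
qed

lemma E_pow2: "c < 2^m \<Longrightarrow> j < m \<Longrightarrow> E m c (2^j) = (if bit c j then -1 else 1)"
proof (induction m arbitrary: c)
  case 0 then show ?case by simp
next
  case (Suc m)
  show ?case
  proof (cases "j < m")
    case True
    have lt: "(2::nat)^j < 2^m" using True by simp
    show ?thesis
    proof (cases "c < 2^m")
      case True
      then show ?thesis using E_lo[OF lt, of c] Suc.IH[OF True \<open>j<m\<close>] by simp
    next
      case False
      have c': "c - 2^m < 2^m" using Suc.prems False by simp
      have "bit (c - 2^m) j = bit c j"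
      proof -
        have "c - 2^m = c mod 2^m" using Suc.prems False
          by (simp add: le_mod_geq)
        then show ?thesis using True by (simp add: bit_take_bit_iff flip: take_bit_eq_mod)
      qed
      then show ?thesis using E_lo[OF lt, of c] Suc.IH[OF c' \<open>j<m\<close>] False by simp
    qed
  next
    case False
    then have jm: "j = m" using Suc.prems by simp
    have "bit c m \<longleftrightarrow> \<not> c < 2^m"
    proof
      assume "bit c m" then show "\<not> c < 2^m"
        by (metis bit_take_bit_iff less_irrefl take_bit_nat_eq_self_iff)
    next
      assume "\<not> c < 2^m"
      then have "c div 2^m = 1" using Suc.prems by (simp add: div_nat_eqI)
      then show "bit c m" by (simp add: bit_iff_odd)
    qed
    then show ?thesis using E_hi[of 0 m c] E_0 jm by simp
  qed
qed


definition dd :: "real vec \<Rightarrow> nat \<Rightarrow> real" where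
  "dd a l = (if l = 0 then 0 else a $ (l - 1))"

lemma H_carrier: "sylvester_hadamard m \<in> carrier_mat (2^m) (2^m)"
  by (simp add: sylvester_hadamard_def)

lemma dims[simp]: "dim_row (sylvester_hadamard m) = 2^m" "dim_col (sylvester_hadamard m) = 2^m"
  "dim_row (diag0 K a) = K" "dim_col (diag0 K a) = K"
  by (simp_all add: sylvester_hadamard_def diag0_def)

lemma H_index: "i < 2^m \<Longrightarrow> j < 2^m \<Longrightarrow> sylvester_hadamard m $$ (i,j) = E m i j"
  by (simp add: sylvester_hadamard_def)

lemma D_carrier: "diag0 K a \<in> carrier_mat K K"
  by (simp add: diag0_def)

lemma Ht_carrier: "transpose_mat (sylvester_hadamard m) \<in> carrier_mat (2^m) (2^m)"
  by (simp add: sylvester_hadamard_def)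

lemma Z_carrier: "Zmat m a \<in> carrier_mat (2^m) (2^m)"
  unfolding Zmat_def
  by (rule mult_carrier_mat[OF mult_carrier_mat[OF H_carrier D_carrier] Ht_carrier])

lemma HD_index: "i < 2^m \<Longrightarrow> l < 2^m \<Longrightarrow>
  (sylvester_hadamard m * diag0 (2^m) a) $$ (i,l) = E m i l * dd a l"
proof -
  assume i: "i < 2^m" and l: "l < 2^m"
  have "(sylvester_hadamard m * diag0 (2^m) a) $$ (i,l)
     = (\<Sum>k<2^m. E m i k * (if k = l then dd a l else 0))"
    using i l by (auto simp: sylvester_hadamard_def diag0_def dd_def scalar_prod_def
        atLeast0LessThan intro!: sum.cong)
  also have "\<dots> = E m i l * dd a l"
    by (simp add: if_distrib[of "\<lambda>x. _ * x"] cong: if_cong) (simp add: l)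
  finally show ?thesis .
qed

lemma Z_index: "i < 2^m \<Longrightarrow> j < 2^m \<Longrightarrow>
  Zmat m a $$ (i,j) = (\<Sum>l<2^m. E m i l * dd a l * E m j l)"
proof -
  assume i: "i < 2^m" and j: "j < 2^m"
  have HD: "sylvester_hadamard m * diag0 (2^m) a \<in> carrier_mat (2^m) (2^m)"
    by (rule mult_carrier_mat[OF H_carrier D_carrier])
  have "Zmat m a $$ (i,j) = (\<Sum>l<2^m. (sylvester_hadamard m * diag0 (2^m) a) $$ (i,l) * sylvester_hadamard m $$ (j,l))"
    unfolding Zmat_def using HD i j H_carrier[of m]
    by (simp add: scalar_prod_def atLeast0LessThan)
  also have "\<dots> = (\<Sum>l<2^m. E m i l * dd a l * E m j l)"
    by (intro sum.cong refl) (simp add: HD_index[OF i] H_index[OF j] del: index_mult_mat)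
  finally show ?thesis .
qed

lemma HHt: "sylvester_hadamard m * transpose_mat (sylvester_hadamard m) = (2^m::real) \<cdot>\<^sub>m 1\<^sub>m (2^m)"
  by (rule eq_matI) (auto simp: sylvester_hadamard_def scalar_prod_def atLeast0LessThan E_orth)

lemma det_H: "det (sylvester_hadamard m) \<noteq> 0"
proof -
  have "det (sylvester_hadamard m) * det (sylvester_hadamard m) = det ((2^m::real) \<cdot>\<^sub>m 1\<^sub>m (2^m))"
    using det_mult[OF H_carrier Ht_carrier] HHt
    by (metis H_carrier det_transpose)
  also have "\<dots> \<noteq> 0" by (simp add: det_smult)
  finally show ?thesis by auto
qed

lemma Z_mult_col: "k < 2^m \<Longrightarrow>
  Zmat m a *\<^sub>v col (sylvester_hadamard m) k = (2^m * dd a k) \<cdot>\<^sub>v col (sylvester_hadamard m) k"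
proof (rule eq_vecI)
  assume k: "k < 2^m"
  show "dim_vec (Zmat m a *\<^sub>v col (sylvester_hadamard m) k) = dim_vec ((2^m * dd a k) \<cdot>\<^sub>v col (sylvester_hadamard m) k)"
    using Z_carrier[of m a] by (simp add: sylvester_hadamard_def)
  fix i assume "i < dim_vec ((2^m * dd a k) \<cdot>\<^sub>v col (sylvester_hadamard m) k)"
  then have i: "i < 2^m" by (simp add: sylvester_hadamard_def)
  have "(Zmat m a *\<^sub>v col (sylvester_hadamard m) k) $ i
      = (\<Sum>j<2^m. (\<Sum>l<2^m. E m i l * dd a l * E m j l) * E m j k)"
    using i k Z_carrier[of m a]
    by (auto simp: scalar_prod_def atLeast0LessThan Z_index H_index sylvester_hadamard_def intro!: sum.cong)
  also have "\<dots> = (\<Sum>j<2^m. \<Sum>l<2^m. (E m i l * dd a l) * (E m j l * E m j k))"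
    by (simp add: sum_distrib_right mult.assoc)
  also have "\<dots> = (\<Sum>l<2^m. \<Sum>j<2^m. (E m i l * dd a l) * (E m j l * E m j k))"
    by (rule sum.swap)
  also have "\<dots> = (\<Sum>l<2^m. E m i l * dd a l * (\<Sum>j<2^m. E m l j * E m k j))"
    unfolding sum_distrib_left by (intro sum.cong refl) (metis E_sym)
  also have "\<dots> = (\<Sum>l<2^m. E m i l * dd a l * (if l = k then 2^m else 0))"
    by (intro sum.cong refl) (simp add: E_orth k)
  also have "\<dots> = 2^m * dd a k * E m i k"
    by (simp add: if_distrib[of "\<lambda>x. _ * x"] cong: if_cong) (simp add: k)
  finally show "(Zmat m a *\<^sub>v col (sylvester_hadamard m) k) $ i = ((2^m * dd a k) \<cdot>\<^sub>v col (sylvester_hadamard m) k) $ i"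
    using i k by (simp add: sylvester_hadamard_def)
qed


lemma E_pm: "E m i j = 1 \<or> E m i j = -1"
  by (induction m arbitrary: i j) (auto simp: Let_def)

lemma Z_diff: "c < 2^m \<Longrightarrow> c' < 2^m \<Longrightarrow>
  Zmat m a $$ (c,c) - Zmat m a $$ (c',c) = (\<Sum>l<2^m. dd a l * (1 - E m c' l * E m c l))"
proof -
  assume c: "c < 2^m" and c': "c' < 2^m"
  have "Zmat m a $$ (c,c) - Zmat m a $$ (c',c) = (\<Sum>l<2^m. E m c l * dd a l * E m c l - E m c' l * dd a l * E m c l)"
    by (simp add: Z_index c c' sum_subtractf)
  also have "\<dots> = (\<Sum>l<2^m. dd a l * (1 - E m c' l * E m c l))"
  proof (intro sum.cong refl)
    fix l
    have "E m c l * dd a l * E m c l = dd a l * (E m c l * E m c l)" by simp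
    then show "E m c l * dd a l * E m c l - E m c' l * dd a l * E m c l = dd a l * (1 - E m c' l * E m c l)"
      by (simp add: E_sq algebra_simps)
  qed
  finally show ?thesis .
qed

lemma H_col_inj: "i < 2^m \<Longrightarrow> j < 2^m \<Longrightarrow> col (sylvester_hadamard m) i = col (sylvester_hadamard m) j \<Longrightarrow> i = j"
proof (rule ccontr)
  assume i: "i < 2^m" and j: "j < 2^m" and eq: "col (sylvester_hadamard m) i = col (sylvester_hadamard m) j" and ne: "i \<noteq> j"
  have "\<forall>l<2^m. E m i l = E m j l"
  proof (intro allI impI)
    fix l assume l: "l < (2::nat)^m"
    have "col (sylvester_hadamard m) i $ l = col (sylvester_hadamard m) j $ l" using eq by simp
    then show "E m i l = E m j l" using i j l by (simp add: H_index E_sym[of m _ l])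
  qed
  then have "(\<Sum>l<2^m. E m i l * E m j l) = (\<Sum>l<2^m. E m i l * E m i l)" by simp
  then show False using E_orth[OF i j] E_orth[OF i i] ne by simp
qed

lemma rank_eq: "vec_space.rank (2^m) (Zmat m a) = card {k. k < 2^m \<and> dd a k \<noteq> 0}"
proof -
  interpret V: vec_space "TYPE(real)" "2^m" .
  define H where "H = sylvester_hadamard m"
  define Z where "Z = Zmat m a"
  define S where "S = {k. k < 2^m \<and> dd a k \<noteq> 0}"
  define T where "T = col H ` S"
  have HC: "H \<in> carrier_mat (2^m) (2^m)" unfolding H_def by (rule H_carrier)
  have ZC: "Z \<in> carrier_mat (2^m) (2^m)" unfolding Z_def by (rule Z_carrier)
  have S_sub: "S \<subseteq> {..<2^m}" unfolding S_def by auto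
  have fS: "finite S" using S_sub finite_subset by blast
  have inj: "inj_on (col H) {..<2^m}" unfolding H_def using H_col_inj by (auto intro: inj_onI)
  have cardT: "card T = card S" unfolding T_def by (rule card_image[OF inj_on_subset[OF inj S_sub]])
  have fT: "finite T" unfolding T_def using fS by simp
  have cT: "T \<subseteq> carrier_vec (2^m)"
  proof
    fix v assume "v \<in> T"
    then obtain k where v: "v = col H k" unfolding T_def by auto
    have "dim_vec v = 2^m" using HC v by simp
    then show "v \<in> carrier_vec (2^m)" by (rule carrier_vecI)
  qed
  have dist: "distinct (cols H)" unfolding distinct_conv_nth
  proof (intro allI impI)
    fix i j assume i: "i < length (cols H)" and j: "j < length (cols H)" and ij: "i \<noteq> j"
    have i': "i < 2^m" and j': "j < 2^m" using i j HC by auto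
    show "cols H ! i \<noteq> cols H ! j"
      using H_col_inj[OF i' j'] ij i' j' HC unfolding H_def by (metis cols_nth dims(2))
  qed
  have rH: "V.rank H = 2^m" using V.det_rank_iff[OF HC] det_H unfolding H_def by simp
  have li: "V.lin_indpt (set (cols H))" using V.full_rank_lin_indpt[OF HC rH dist] .
  have TH: "T \<subseteq> set (cols H)"
  proof
    fix v assume "v \<in> T"
    then obtain k where k: "k < 2^m" and v: "v = col H k" unfolding T_def S_def by auto
    have "cols H ! k = col H k" using k HC by simp
    moreover have "k < length (cols H)" using k HC by simp
    ultimately show "v \<in> set (cols H)" using v nth_mem by metis
  qed
  have liT: "V.lin_indpt T" using V.subset_li_is_li[OF li TH] .
  have T_span: "T \<subseteq> V.span (set (cols Z))"
  proof
    fix v assume "v \<in> T"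
    then obtain k where k: "k < 2^m" "dd a k \<noteq> 0" and v: "v = col H k" unfolding T_def S_def by auto
    have "v = (1 / (2^m * dd a k)) \<cdot>\<^sub>v (Z *\<^sub>v col H k)"
      unfolding Z_def H_def Z_mult_col[OF k(1)] v using k(2) by (simp add: smult_smult_assoc)
    moreover have "Z *\<^sub>v col H k \<in> V.span (set (cols Z))"
      by (rule V.mult_in_span[OF ZC]) (use HC k in auto)
    ultimately show "v \<in> V.span (set (cols Z))"
      using V.smult_in_span[of "set (cols Z)"] ZC cols_dim by (metis carrier_matD(1))
  qed
  have ge: "card S \<le> V.rank Z" using V.rank_ge_li_in_span[OF ZC T_span liT] cardT by simp
  have Z_span: "set (cols Z) \<subseteq> V.span T"
  proof
    fix w assume "w \<in> set (cols Z)"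
    then obtain c where c: "c < 2^m" and w: "w = col Z c" using ZC by (auto simp: in_set_conv_nth)
    define g where "g = (\<lambda>v. let l = inv_into S (col H) v in dd a l * E m c l)"
    have "w = V.lincomb g T"
    proof (rule eq_vecI)
      show "dim_vec w = dim_vec (V.lincomb g T)" using w ZC V.lincomb_dim[OF fT cT, of g] by simp
      fix i assume "i < dim_vec (V.lincomb g T)"
      then have i: "i < 2^m" using V.lincomb_dim[OF fT cT, of g] by simp
      have "V.lincomb g T $ i = (\<Sum>v\<in>T. g v * v $ i)" by (rule V.lincomb_index[OF i cT])
      also have "\<dots> = (\<Sum>l\<in>S. g (col H l) * col H l $ i)" unfolding T_def
        by (rule sum.reindex_cong[of "col H"]) (use inj S_sub inj_on_subset in auto)
      also have "\<dots> = (\<Sum>l\<in>S. E m i l * dd a l * E m c l)"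
        using inj S_sub i HC by (intro sum.cong refl) (auto simp: g_def inv_into_f_f inj_on_subset H_def H_index)
      also have "\<dots> = (\<Sum>l<2^m. E m i l * dd a l * E m c l)"
        by (rule sum.mono_neutral_left) (auto simp: S_def)
      also have "\<dots> = w $ i" using w i c ZC by (simp add: Z_def Z_index)
      finally show "w $ i = V.lincomb g T $ i" by simp
    qed
    then show "w \<in> V.span T" using fT by (intro V.in_spanI) auto
  qed
  have le: "V.rank Z \<le> card T" using V.rank_le_span_card[OF ZC Z_span fT cT] .
  show ?thesis using ge le cardT unfolding Z_def S_def by simp
qed

lemma E_in: "E m i j \<in> {1, -1}" using E_pm[of m i j] by auto

lemma lower_card: assumes adm: "admissible m a" shows "m \<le> card {k. k < 2^m \<and> dd a k \<noteq> 0}"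
proof -
  define S where "S = {k. k < 2^m \<and> dd a k \<noteq> 0}"
  have S_sub: "S \<subseteq> {..<2^m}" unfolding S_def by auto
  have fS: "finite S" using S_sub finite_subset by blast
  define f where "f c = restrict (\<lambda>k. E m c k) S" for c
  have inj: "inj_on f {..<2^m}"
  proof (rule inj_onI)
    fix c c' assume c: "c \<in> {..<(2::nat)^m}" and c': "c' \<in> {..<(2::nat)^m}" and eq: "f c = f c'"
    show "c = c'"
    proof (rule ccontr)
      assume ne: "c \<noteq> c'"
      have same: "E m c k = E m c' k" if "k \<in> S" for k
        using fun_cong[OF eq, of k] that by (simp add: f_def)
      have "(\<Sum>l<2^m. dd a l * (1 - E m c' l * E m c l)) = 0"
      proof (rule sum.neutral, intro ballI)
        fix l assume l: "l \<in> {..<(2::nat)^m}"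
        show "dd a l * (1 - E m c' l * E m c l) = 0"
        proof (cases "dd a l = 0")
          case False
          then have "l \<in> S" using l by (simp add: S_def)
          then have "E m c' l * E m c l = 1" using same E_sq by metis
          then show ?thesis by simp
        qed simp
      qed
      moreover have "Zmat m a $$ (c,c) - Zmat m a $$ (c',c) > 0"
        using adm ne c c' unfolding admissible_def by auto
      ultimately show False using Z_diff[of c m c' a] c c' by simp
    qed
  qed
  have img: "f ` {..<2^m} \<subseteq> PiE S (\<lambda>_. {1, -1})"
    using E_pm[of m] by (fastforce simp: f_def restrict_PiE_iff)
  have "card {..<(2::nat)^m} \<le> card (PiE S (\<lambda>_. {1, -1::real}))"
    by (rule card_inj_on_le[OF inj img]) (simp add: fS finite_PiE)
  also have "\<dots> = 2 ^ card S" using card_PiE[OF fS, of "\<lambda>_. {1, -1::real}"] by (simp add: numeral_2_eq_2)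
  finally have "(2::nat)^m \<le> 2 ^ card S" by simp
  then show ?thesis unfolding S_def by (rule power_le_imp_le_exp[rotated]) simp
qed

lemma bits_differ: "c < 2^m \<Longrightarrow> c' < 2^m \<Longrightarrow> c \<noteq> (c'::nat) \<Longrightarrow> \<exists>j<m. bit c j \<noteq> bit c' j"
proof (rule ccontr)
  assume c: "c < 2^m" and c': "c' < 2^m" and ne: "c \<noteq> c'" and "\<not> (\<exists>j<m. bit c j \<noteq> bit c' j)"
  then have h: "\<forall>j<m. bit c j = bit c' j" by blast
  have "take_bit m c = c" "take_bit m c' = c'" using c c' by (simp_all add: take_bit_nat_eq_self_iff)
  moreover have "take_bit m c = take_bit m c'"
    by (rule bit_eqI) (use h in \<open>auto simp: bit_take_bit_iff\<close>)
  ultimately show False using ne by simp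
qed

definition a0 :: "nat \<Rightarrow> real vec" where
  "a0 m = vec (2^m - 1) (\<lambda>i. if \<exists>j<m. Suc i = 2^j then 1 else 0)"

lemma dd_a0: "k < 2^m \<Longrightarrow> dd (a0 m) k = (if \<exists>j<m. k = 2^j then 1 else 0)"
proof (cases "k = 0")
  case True then show ?thesis by (simp add: dd_def)
next
  case False
  assume k: "k < 2^m"
  then have "k - 1 < 2^m - 1" using False by simp
  then show ?thesis using False by (simp add: dd_def a0_def)
qed

lemma S_a0: "{k. k < 2^m \<and> dd (a0 m) k \<noteq> 0} = (\<lambda>j. 2^j) ` {..<m}"
proof -
  have "k < 2^m \<and> dd (a0 m) k \<noteq> 0 \<longleftrightarrow> (\<exists>j<m. k = 2^j)" for k
  proof
    assume "k < 2^m \<and> dd (a0 m) k \<noteq> 0"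
    then show "\<exists>j<m. k = 2^j" using dd_a0[of k m] by (auto split: if_splits)
  next
    assume "\<exists>j<m. k = 2^j"
    then obtain j where j: "j < m" "k = 2^j" by auto
    then have "k < 2^m" by simp
    then show "k < 2^m \<and> dd (a0 m) k \<noteq> 0" using dd_a0[of k m] j by auto
  qed
  then show ?thesis by auto
qed

lemma card_S_a0: "card {k. k < 2^m \<and> dd (a0 m) k \<noteq> 0} = m"
proof -
  have "inj_on (\<lambda>j. (2::nat)^j) {..<m}" by (auto simp: inj_on_def)
  then show ?thesis unfolding S_a0 by (simp add: card_image)
qed

lemma adm_a0: "admissible m (a0 m)"
  unfolding admissible_def
proof (intro conjI allI impI)
  show "a0 m \<in> carrier_vec (2^m - 1)" by (simp add: a0_def)
  fix i :: nat assume "i < 2^m - 1" then show "0 \<le> a0 m $ i" by (simp add: a0_def)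
next
  fix c c' assume c: "c < (2::nat)^m" and c': "c' < (2::nat)^m" and ne: "c' \<noteq> c"
  obtain j where j: "j < m" "bit c j \<noteq> bit c' j" using bits_differ[OF c c'] ne by metis
  have pj: "(2::nat)^j < 2^m" using j by simp
  have nn: "\<forall>l\<in>{..<(2::nat)^m}. 0 \<le> dd (a0 m) l * (1 - E m c' l * E m c l)"
  proof
    fix l assume l: "l \<in> {..<(2::nat)^m}"
    have "E m c' l * E m c l \<le> 1" using E_pm[of m c' l] E_pm[of m c l] by auto
    moreover have "0 \<le> dd (a0 m) l" using dd_a0[of l m] l by simp
    ultimately show "0 \<le> dd (a0 m) l * (1 - E m c' l * E m c l)" by simp
  qed
  have pos: "0 < dd (a0 m) (2^j) * (1 - E m c' (2^j) * E m c (2^j))"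
    using dd_a0[OF pj] j E_pow2[OF c j(1)] E_pow2[OF c' j(1)] by auto
  have "0 < (\<Sum>l<2^m. dd (a0 m) l * (1 - E m c' l * E m c l))"
    by (rule sum_pos2[of _ "2^j"]) (use pj pos nn in auto)
  then show "0 < Zmat m (a0 m) $$ (c, c) - Zmat m (a0 m) $$ (c', c)" using Z_diff[OF c c'] by simp
qed

theorem propositionC1:
  fixes m :: nat
  shows "(\<exists>a. admissible m a \<and> vec_space.rank (2 ^ m) (Zmat m a) = m) \<and>
         (\<forall>a. admissible m a \<longrightarrow> m \<le> vec_space.rank (2 ^ m) (Zmat m a))"
proof
  show "\<exists>a. admissible m a \<and> vec_space.rank (2 ^ m) (Zmat m a) = m"
    using adm_a0[of m] rank_eq[of m "a0 m"] card_S_a0[of m] by auto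
  show "\<forall>a. admissible m a \<longrightarrow> m \<le> vec_space.rank (2 ^ m) (Zmat m a)"
    using lower_card rank_eq by simp
qed
end
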